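(* Let $(\mathcal{X},\mathfrak{X})$, $(\mathcal{Y},\mathfrak{Y})$ be measurable spaces, let $\mu,\nu$ be finite measures on $(\mathcal{X}\times\mathcal{Y},\mathfrak{X}\times\mathfrak{Y})$, and let $\xi$ be a finite measure with $\xi\ll\mu+\nu$. Then for every $\epsilon>0$ there exist a finite sub-$\sigma$-algebra $\mathfrak{C}$ of $\mathfrak{X}$ and a finite sub-$\sigma$-algebra $\mathfrak{D}$ of $\mathfrak{Y}$ such that \[ \xi\bigl\{d_{\mathbb{H}}\bigl([\mathrm{d}\mu|_{\mathfrak{F}}:\mathrm{d}\nu|_{\mathfrak{F}}],[\mathrm{d}\mu:\mathrm{d}\nu]\bigr)\ge\epsilon\bigr\}<\epsilon \] for every $\sigma$-algebra $\mathfrak{F}$ with $\mathfrak{C}\times\mathfrak{D}\subseteq\mathfrak{F}\subseteq\mathfrak{X}\times\mathfrak{Y}$.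
   Context: The half projective line $\mathbb{H}$ is the set of rays $[r:s]=\{t(r,s):t>0\}$ for $(r,s)\in[0,\infty)^2\setminus\{(0,0)\}$, with metric $d_{\mathbb{H}}([r_1:s_1],[r_2:s_2])=|r_1/(r_1+s_1)-r_2/(r_2+s_2)|$. For finite measures $\alpha,\beta$ on a measurable space, the likelihood ratio is the $\mathbb{H}$-valued function $[\mathrm{d}\alpha:\mathrm{d}\beta]:=[\mathrm{d}\alpha/\mathrm{d}(\alpha+\beta):\mathrm{d}\beta/\mathrm{d}(\alpha+\beta)]$, defined $(\alpha+\beta)$-a.e. For a sub-$\sigma$-algebra $\mathfrak{F}$, $\mu|_{\mathfrak{F}}$ denotes the restriction of $\mu$ to $\mathfrak{F}$, so $[\mathrm{d}\mu|_{\mathfrak{F}}:\mathrm{d}\nu|_{\mathfrak{F}}]$ is the likelihood ratio of the restricted measures (an $\mathfrak{F}$-measurable function on $\mathcal{X}\times\mathcal{Y}$). *)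

theory Defs
  imports "HOL-Probability.Probability"
begin

definition add_measure :: "'a measure \<Rightarrow> 'a measure \<Rightarrow> 'a measure" where
  "add_measure M N = measure_of (space M) (sets M) (\<lambda>A. emeasure M A + emeasure N A)"

definition restr_measure :: "'a measure \<Rightarrow> 'a set set \<Rightarrow> 'a measure" where
  "restr_measure M F = measure_of (space M) F (emeasure M)"

text \<open>A point of the half projective line, represented by a pair (r,s) with r,s \<ge> 0,
  (r,s) \<noteq> (0,0); the metric d_H.\<close>
definition dH :: "real \<times> real \<Rightarrow> real \<times> real \<Rightarrow> real" where
  "dH p q = \<bar>fst p / (fst p + snd p) - fst q / (fst q + snd q)\<bar>"

text \<open>Likelihood ratio [d\<alpha> : d\<beta>] = [d\<alpha>/d(\<alpha>+\<beta>) : d\<beta>/d(\<alpha>+\<beta>)], a version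
  defined everywhere (determined (\<alpha>+\<beta>)-a.e.).\<close>
definition likelihood_ratio :: "'a measure \<Rightarrow> 'a measure \<Rightarrow> 'a \<Rightarrow> real \<times> real" where
  "likelihood_ratio \<alpha> \<beta> = (\<lambda>x. (enn2real (RN_deriv (add_measure \<alpha> \<beta>) \<alpha> x),
                                 enn2real (RN_deriv (add_measure \<alpha> \<beta>) \<beta> x)))"

definition prod_sigma :: "'a set \<Rightarrow> 'a set set \<Rightarrow> 'b set \<Rightarrow> 'b set set \<Rightarrow> ('a \<times> 'b) set set" where
  "prod_sigma X C Y D = sigma_sets (X \<times> Y) {a \<times> b | a b. a \<in> C \<and> b \<in> D}"

end

theory Submission
  imports Defs
begin


lemma add_measure_props:
  assumes "sets a = sets b"
  shows "sets (add_measure a b) = sets a" and "space (add_measure a b) = space a"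
    and "\<And>A. A \<in> sets a \<Longrightarrow> emeasure (add_measure a b) A = emeasure a A + emeasure b A"
proof -
  show "sets (add_measure a b) = sets a" unfolding add_measure_def by simp
  show "space (add_measure a b) = space a" unfolding add_measure_def by simp
  fix A assume A: "A \<in> sets a"
  have sp: "space b = space a" using assms sets_eq_imp_space_eq by metis
  have ca: "countably_additive (sets a) (\<lambda>A. emeasure a A + emeasure b A)"
  proof (rule countably_additiveI)
    fix F :: "nat \<Rightarrow> _" assume "range F \<subseteq> sets a" "disjoint_family F" "\<Union> (range F) \<in> sets a"
    then show "(\<Sum>i. emeasure a (F i) + emeasure b (F i)) = emeasure a (\<Union> (range F)) + emeasure b (\<Union> (range F))"
      using assms by (simp add: suminf_add[symmetric] suminf_emeasure)
  qed
  show "emeasure (add_measure a b) A = emeasure a A + emeasure b A"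
    unfolding add_measure_def
    by (rule emeasure_measure_of_sigma[OF sets.sigma_algebra_axioms _ ca A]) (simp add: positive_def)
qed

lemma add_measure_fin:
  assumes "sets a = sets b" "finite_measure a" "finite_measure b"
  shows "finite_measure (add_measure a b)"
proof -
  have sp: "space b = space a" using sets_eq_imp_space_eq[OF assms(1)] by simp
  have "emeasure (add_measure a b) (space a) = emeasure a (space a) + emeasure b (space b)"
    using add_measure_props(3)[OF assms(1)] sp by simp
  then have "emeasure (add_measure a b) (space (add_measure a b)) \<noteq> \<infinity>"
    using add_measure_props(2)[OF assms(1)] assms(2,3)
    by (simp add: finite_measure.emeasure_finite)
  then show ?thesis by (rule finite_measureI)
qed

lemma add_measure_ac:
  assumes "sets a = sets b"
  shows "absolutely_continuous (add_measure a b) a" "absolutely_continuous (add_measure a b) b"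
  using add_measure_props[OF assms] assms
  by (auto simp: absolutely_continuous_def null_sets_def)

lemma RN_sum_one:
  assumes ab: "sets a = sets b" and fa: "finite_measure a" and fb: "finite_measure b"
  shows "AE x in add_measure a b. enn2real (RN_deriv (add_measure a b) a x) + enn2real (RN_deriv (add_measure a b) b x) = 1"
proof -
  let ?s = "add_measure a b"
  interpret s: finite_measure ?s using add_measure_fin[OF assms] .
  note P = add_measure_props[OF ab]
  have da: "density ?s (RN_deriv ?s a) = a"
    by (rule s.density_RN_deriv) (use add_measure_ac[OF ab] P in auto)
  have db: "density ?s (RN_deriv ?s b) = b"
    by (rule s.density_RN_deriv) (use add_measure_ac[OF ab] P ab in auto)
  have "density ?s (\<lambda>x. RN_deriv ?s a x + RN_deriv ?s b x) = density ?s (\<lambda>_. 1)"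
  proof (rule measure_eqI)
    show "sets (density ?s (\<lambda>x. RN_deriv ?s a x + RN_deriv ?s b x)) = sets (density ?s (\<lambda>_. 1))" by simp
    fix A assume A: "A \<in> sets (density ?s (\<lambda>x. RN_deriv ?s a x + RN_deriv ?s b x))"
    then have As[measurable]: "A \<in> sets ?s" by simp
    have "emeasure (density ?s (\<lambda>x. RN_deriv ?s a x + RN_deriv ?s b x)) A
       = (\<integral>\<^sup>+x\<in>A. RN_deriv ?s a x + RN_deriv ?s b x \<partial>?s)"
      using As by (simp add: emeasure_density)
    also have "\<dots> = (\<integral>\<^sup>+x\<in>A. RN_deriv ?s a x \<partial>?s) + (\<integral>\<^sup>+x\<in>A. RN_deriv ?s b x \<partial>?s)"
      by (subst nn_integral_add[symmetric]) (auto simp: distrib_right intro!: nn_integral_cong)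
    also have "\<dots> = emeasure (density ?s (RN_deriv ?s a)) A + emeasure (density ?s (RN_deriv ?s b)) A"
      using As by (simp add: emeasure_density)
    also have "\<dots> = emeasure a A + emeasure b A" by (simp add: da db)
    also have "\<dots> = emeasure ?s A" using As P by simp
    also have "\<dots> = emeasure (density ?s (\<lambda>_. 1)) A" using As by (simp add: emeasure_density)
    finally show "emeasure (density ?s (\<lambda>x. RN_deriv ?s a x + RN_deriv ?s b x)) A = emeasure (density ?s (\<lambda>_. 1)) A" .
  qed
  then have "AE x in ?s. RN_deriv ?s a x + RN_deriv ?s b x = 1"
    by (subst (asm) s.density_unique_iff) auto
  then show ?thesis
  proof (rule AE_mp[OF _ AE_I2], intro impI)
    fix x assume h: "RN_deriv ?s a x + RN_deriv ?s b x = 1"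
    then have "RN_deriv ?s a x \<noteq> top" "RN_deriv ?s b x \<noteq> top" by (auto simp: top_add add_top)
    then show "enn2real (RN_deriv ?s a x) + enn2real (RN_deriv ?s b x) = 1"
      using h enn2real_plus[of "RN_deriv ?s a x" "RN_deriv ?s b x"] by (simp add: top.not_eq_extremum)
  qed
qed


lemma restr_facts:
  assumes sa: "sigma_algebra (space M) F" and sub: "F \<subseteq> sets M"
  shows "sets (sigma (space M) F) = F" "space (sigma (space M) F) = space M"
    "subalgebra M (sigma (space M) F)"
    "restr_measure M F = restr_to_subalg M (sigma (space M) F)"
proof -
  have Fp: "F \<subseteq> Pow (space M)" using sub sets.space_closed[of M] by auto
  show s: "sets (sigma (space M) F) = F"
    using sa Fp by (simp add: sigma_algebra.sigma_sets_eq)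
  show sp: "space (sigma (space M) F) = space M"
    using Fp by simp
  show "subalgebra M (sigma (space M) F)" using s sp sub by (simp add: subalgebra_def)
  show "restr_measure M F = restr_to_subalg M (sigma (space M) F)"
    unfolding restr_measure_def restr_to_subalg_def s ..
qed

lemma add_restr:
  assumes ab: "sets a = sets b" and sa: "sigma_algebra (space a) F" and sub: "F \<subseteq> sets a"
  shows "add_measure (restr_measure a F) (restr_measure b F)
       = restr_to_subalg (add_measure a b) (sigma (space a) F)"
proof -
  have spb: "space b = space a" using sets_eq_imp_space_eq[OF ab] by simp
  note ra = restr_facts[OF sa sub]
  note rb = restr_facts[of b F, unfolded spb, OF sa sub[unfolded ab]]
  note P = add_measure_props[OF ab]
  have subs: "subalgebra (add_measure a b) (sigma (space a) F)"
    using ra P by (simp add: subalgebra_def)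
  have e1: "sets (restr_measure a F) = sets (restr_measure b F)"
    using ra rb by (simp add: sets_restr_to_subalg)
  show ?thesis
  proof (rule measure_eqI)
    show "sets (add_measure (restr_measure a F) (restr_measure b F)) =
      sets (restr_to_subalg (add_measure a b) (sigma (space a) F))"
      using add_measure_props(1)[OF e1] ra subs by (simp add: sets_restr_to_subalg)
    fix A assume "A \<in> sets (add_measure (restr_measure a F) (restr_measure b F))"
    then have A: "A \<in> F" using add_measure_props(1)[OF e1] ra by (simp add: sets_restr_to_subalg)
    then have "A \<in> sets (restr_measure a F)" using ra by (simp add: sets_restr_to_subalg)
    then have "emeasure (add_measure (restr_measure a F) (restr_measure b F)) A
      = emeasure (restr_measure a F) A + emeasure (restr_measure b F) A"
      using add_measure_props(3)[OF e1] by simp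
    also have "\<dots> = emeasure a A + emeasure b A"
      using ra rb A by (simp add: emeasure_restr_to_subalg)
    also have "\<dots> = emeasure (restr_to_subalg (add_measure a b) (sigma (space a) F)) A"
      using subs A ra P sub by (subst emeasure_restr_to_subalg) auto
    finally show "emeasure (add_measure (restr_measure a F) (restr_measure b F)) A
      = emeasure (restr_to_subalg (add_measure a b) (sigma (space a) F)) A" .
  qed
qed

lemma contraction:
  fixes h f g :: "'a \<Rightarrow> real"
  assumes sub: "sets Fm \<subseteq> sets L" "space Fm = space L"
    and hm: "h \<in> borel_measurable Fm" and gm: "g \<in> borel_measurable Fm"
    and ih: "integrable L h" and fi: "integrable L f" and gi: "integrable L g"
    and eq: "\<And>A. A \<in> sets Fm \<Longrightarrow> (\<integral>x. h x * indicator A x \<partial>L) = (\<integral>x. f x * indicator A x \<partial>L)"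
  shows "(\<integral>x. \<bar>h x - f x\<bar> \<partial>L) \<le> 2 * (\<integral>x. \<bar>f x - g x\<bar> \<partial>L)"
proof -
  define A where "A = {x\<in>space L. g x \<le> h x}"
  define B where "B = space L - A"
  have top: "space L \<in> sets Fm" using sets.top[of Fm] sub(2) by simp
  have "{x\<in>space Fm. g x \<le> h x} \<in> sets Fm" using hm gm by measurable
  then have AF: "A \<in> sets Fm" unfolding A_def using sub(2) by simp
  have BF: "B \<in> sets Fm" unfolding B_def using AF sets.compl_sets[of A Fm] sub(2) by simp
  have AL: "A \<in> sets L" and BL: "B \<in> sets L" using AF BF sub by auto
  have key: "(\<integral>x. (h x - g x) * indicator C x \<partial>L) = (\<integral>x. (f x - g x) * indicator C x \<partial>L)"
    if C: "C \<in> sets Fm" for C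
  proof -
    have CL: "C \<in> sets L" using C sub by auto
    have "(\<integral>x. (h x - g x) * indicator C x \<partial>L) = (\<integral>x. h x * indicator C x - g x * indicator C x \<partial>L)"
      by (simp add: left_diff_distrib)
    also have "\<dots> = (\<integral>x. h x * indicator C x \<partial>L) - (\<integral>x. g x * indicator C x \<partial>L)"
      by (rule Bochner_Integration.integral_diff) (auto intro!: integrable_real_mult_indicator CL ih gi)
    also have "\<dots> = (\<integral>x. f x * indicator C x \<partial>L) - (\<integral>x. g x * indicator C x \<partial>L)" using eq[OF C] by simp
    also have "\<dots> = (\<integral>x. f x * indicator C x - g x * indicator C x \<partial>L)"
      by (rule Bochner_Integration.integral_diff[symmetric]) (auto intro!: integrable_real_mult_indicator CL fi gi)
    also have "\<dots> = (\<integral>x. (f x - g x) * indicator C x \<partial>L)"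
      by (simp add: left_diff_distrib)
    finally show ?thesis .
  qed
  have iA: "integrable L (\<lambda>x. (u x - g x) * indicator C x)" if "integrable L u" "C \<in> sets L" for u C
    using that gi by (intro integrable_real_mult_indicator) auto
  have "(\<integral>x. \<bar>h x - g x\<bar> \<partial>L) = (\<integral>x. (h x - g x) * indicator A x - (h x - g x) * indicator B x \<partial>L)"
    by (rule Bochner_Integration.integral_cong[OF refl]) (auto simp: A_def B_def indicator_def)
  also have "\<dots> = (\<integral>x. (h x - g x) * indicator A x \<partial>L) - (\<integral>x. (h x - g x) * indicator B x \<partial>L)"
    by (rule Bochner_Integration.integral_diff) (auto intro!: iA ih AL BL)
  also have "\<dots> = (\<integral>x. (f x - g x) * indicator A x \<partial>L) - (\<integral>x. (f x - g x) * indicator B x \<partial>L)"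
    using key[OF AF] key[OF BF] by simp
  also have "\<dots> = (\<integral>x. (f x - g x) * indicator A x - (f x - g x) * indicator B x \<partial>L)"
    by (rule Bochner_Integration.integral_diff[symmetric]) (auto intro!: iA fi AL BL)
  also have "\<dots> \<le> (\<integral>x. \<bar>f x - g x\<bar> \<partial>L)"
    by (rule Bochner_Integration.integral_mono[OF Bochner_Integration.integrable_diff[OF iA[OF fi AL] iA[OF fi BL]]]) (auto intro!: fi gi simp: indicator_def)
  finally have 1: "(\<integral>x. \<bar>h x - g x\<bar> \<partial>L) \<le> (\<integral>x. \<bar>f x - g x\<bar> \<partial>L)" .
  have "(\<integral>x. \<bar>h x - f x\<bar> \<partial>L) \<le> (\<integral>x. \<bar>h x - g x\<bar> + \<bar>f x - g x\<bar> \<partial>L)"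
    by (rule Bochner_Integration.integral_mono) (auto intro!: ih fi gi Bochner_Integration.integrable_diff Bochner_Integration.integrable_add)
  also have "\<dots> = (\<integral>x. \<bar>h x - g x\<bar> \<partial>L) + (\<integral>x. \<bar>f x - g x\<bar> \<partial>L)"
    by (rule Bochner_Integration.integral_add) (auto intro!: ih fi gi Bochner_Integration.integrable_diff)
  finally show ?thesis using 1 by simp
qed


lemma abs_cont_eps_delta:
  assumes fL: "finite_measure L" and fX: "finite_measure X" and sX: "sets X = sets L"
    and ac: "absolutely_continuous L X" and e: "e > 0"
  shows "\<exists>d>0. \<forall>A\<in>sets L. measure L A < d \<longrightarrow> measure X A < e"
proof -
  interpret L: finite_measure L by fact
  interpret X: finite_measure X by fact
  have sfX: "sigma_finite_measure X" by unfold_locales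
  define w where "w x = enn2real (RN_deriv L X x)" for x
  have wm[measurable]: "w \<in> borel_measurable L" unfolding w_def by measurable
  have w0: "0 \<le> w x" for x unfolding w_def by simp
  have wi: "integrable L w"
    using L.RN_deriv_integrable[OF sfX ac sX, of "\<lambda>_. 1"] by (simp add: w_def[abs_def])
  have mX: "measure X A = (\<integral>x. w x * indicator A x \<partial>L)" if A: "A \<in> sets L" for A
  proof -
    have "measure X A = (\<integral>x. indicator A x \<partial>X)" using A sX by simp
    also have "\<dots> = (\<integral>x. w x * indicator A x \<partial>L)"
      using L.RN_deriv_integral[OF sfX ac sX, of "indicator A"] A by (simp add: w_def)
    finally show ?thesis .
  qed
  define s where "s n x = w x - min (w x) (real n)" for n x
  have "(\<lambda>n. \<integral>x. s n x \<partial>L) \<longlonglongrightarrow> (\<integral>x. 0 \<partial>L)"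
  proof (rule integral_dominated_convergence[where w=w])
    show "AE x in L. (\<lambda>n. s n x) \<longlonglongrightarrow> 0"
    proof (rule AE_I2)
      fix x
      obtain N :: nat where "w x \<le> real N" using real_arch_simple by blast
      then have "\<forall>n\<ge>N. s n x = 0" unfolding s_def by (auto simp: min_def)
      then show "(\<lambda>n. s n x) \<longlonglongrightarrow> 0" by (intro tendsto_eventually) (auto simp: eventually_sequentially)
    qed
    show "AE x in L. norm (s n x) \<le> w x" for n unfolding s_def using w0 by (auto simp: min_def)
  qed (auto simp: s_def wi)
  then have "(\<lambda>n. \<integral>x. s n x \<partial>L) \<longlonglongrightarrow> 0" by simp
  then obtain n where n: "(\<integral>x. s n x \<partial>L) < e / 2"
    using e by (metis (no_types, lifting) half_gt_zero lim_sequentially dist_real_def abs_less_iff diff_zero order_refl)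
  have si: "integrable L (s n)" unfolding s_def
    by (intro Bochner_Integration.integrable_diff wi Bochner_Integration.integrable_bound[OF L.integrable_const[of "real n"]]) (auto simp: w0)
  define d where "d = e / (2 * (real n + 1))"
  have d: "d > 0" using e by (simp add: d_def)
  show ?thesis
  proof (intro exI[of _ d] conjI ballI impI d)
    fix A assume A: "A \<in> sets L" and Ad: "measure L A < d"
    have "measure X A = (\<integral>x. w x * indicator A x \<partial>L)" using mX[OF A] .
    also have "\<dots> \<le> (\<integral>x. real n * indicator A x + s n x \<partial>L)"
      by (rule Bochner_Integration.integral_mono[OF integrable_real_mult_indicator[OF A wi]
           Bochner_Integration.integrable_add[OF integrable_real_mult_indicator[OF A L.integrable_const] si]])
        (auto simp: s_def indicator_def min_def w0)
    also have "\<dots> = real n * measure L A + (\<integral>x. s n x \<partial>L)"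
      using A si integrable_real_mult_indicator[OF A L.integrable_const[of "1::real"]] by (subst Bochner_Integration.integral_add) auto
    also have "\<dots> < e"
    proof -
      have "real n * measure L A \<le> real n * d" using Ad by (intro mult_left_mono) auto
      also have "\<dots> \<le> e / 2" using e by (simp add: d_def field_simps)
      finally show ?thesis using n by simp
    qed
    finally show "measure X A < e" .
  qed
qed


lemma finite_sigma_sets:
  assumes fin: "finite G" and GX: "G \<subseteq> Pow X"
  shows "finite (sigma_sets X G)"
proof -
  define sig where "sig x = {g\<in>G. x \<in> g}" for x
  have sat: "A \<subseteq> X \<and> (\<forall>x\<in>X. \<forall>y\<in>A. sig x = sig y \<longrightarrow> x \<in> A)" if "A \<in> sigma_sets X G" for A
    using that
  proof induct
    case (Basic a)
    then show ?case using GX by (auto simp: sig_def)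
  next
    case Empty
    then show ?case by simp
  next
    case (Compl a)
    show ?case
    proof (intro conjI ballI impI)
      fix x y assume x: "x \<in> X" and y: "y \<in> X - a" and s: "sig x = sig y"
      have "x \<notin> a"
      proof
        assume xa: "x \<in> a"
        have yX: "y \<in> X" using y by simp
        have "sig y = sig x" using s by simp
        then have "y \<in> a" using Compl(2) yX xa by blast
        then show False using y by simp
      qed
      then show "x \<in> X - a" using x by simp
    qed auto
  next
    case (Union a)
    show ?case
    proof (intro conjI ballI impI)
      show "\<Union> (range a) \<subseteq> X" using Union by auto
      fix x y assume x: "x \<in> X" and y: "y \<in> \<Union> (range a)" and s: "sig x = sig y"
      then obtain i where "y \<in> a i" by auto
      then have "x \<in> a i" using Union(2)[of i] x s by auto
      then show "x \<in> \<Union> (range a)" by auto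
    qed
  qed
  have "sigma_sets X G \<subseteq> (\<lambda>T. {x\<in>X. sig x \<in> T}) ` Pow (Pow G)"
  proof
    fix A assume A: "A \<in> sigma_sets X G"
    have "A = {x\<in>X. sig x \<in> sig ` A}" using sat[OF A] by blast
    moreover have "sig ` A \<in> Pow (Pow G)" by (auto simp: sig_def)
    ultimately show "A \<in> (\<lambda>T. {x\<in>X. sig x \<in> T}) ` Pow (Pow G)" by blast
  qed
  moreover have "finite ((\<lambda>T. {x\<in>X. sig x \<in> T}) ` Pow (Pow G))" using fin by simp
  ultimately show ?thesis by (rule finite_subset)
qed


definition rects :: "'a set set \<Rightarrow> 'b set set \<Rightarrow> ('a \<times> 'b) set set" where
  "rects G1 G2 = {a \<times> b | a b. a \<in> G1 \<and> b \<in> G2}"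

lemma rects_mono: "G1 \<subseteq> H1 \<Longrightarrow> G2 \<subseteq> H2 \<Longrightarrow> rects G1 G2 \<subseteq> rects H1 H2"
  unfolding rects_def by blast

lemma rects_Pow:
  assumes "G1 \<subseteq> sets M1" "G2 \<subseteq> sets M2"
  shows "rects G1 G2 \<subseteq> Pow (space M1 \<times> space M2)"
proof
  fix r assume "r \<in> rects G1 G2"
  then obtain a b where r: "r = a \<times> b" "a \<in> G1" "b \<in> G2" by (auto simp: rects_def)
  then have "a \<in> sets M1" "b \<in> sets M2" using assms by auto
  then have "a \<subseteq> space M1" "b \<subseteq> space M2" by (simp_all add: sets.sets_into_space)
  then show "r \<in> Pow (space M1 \<times> space M2)" using r by auto
qed

lemma rects_sets:
  assumes "G1 \<subseteq> sets M1" "G2 \<subseteq> sets M2"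
  shows "sigma_sets (space M1 \<times> space M2) (rects G1 G2) \<subseteq> sets (M1 \<Otimes>\<^sub>M M2)"
  unfolding sets_pair_measure by (rule sigma_sets_mono') (use assms in \<open>auto simp: rects_def\<close>)

definition goodset :: "'a measure \<Rightarrow> 'b measure \<Rightarrow> ('a \<times> 'b) measure \<Rightarrow> ('a \<times> 'b) set \<Rightarrow> bool" where
  "goodset M1 M2 L A \<longleftrightarrow> (\<forall>\<eta>>0. \<exists>G1 G2 R. finite G1 \<and> G1 \<subseteq> sets M1 \<and> finite G2 \<and> G2 \<subseteq> sets M2 \<and>
      R \<in> sigma_sets (space M1 \<times> space M2) (rects G1 G2) \<and> measure L ((A - R) \<union> (R - A)) < \<eta>)"

lemma approx_sets:
  assumes fL: "finite_measure L" and sL: "sets L = sets (M1 \<Otimes>\<^sub>M M2)" and A: "A \<in> sets L"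
  shows "goodset M1 M2 L A"
proof -
  interpret L: finite_measure L by fact
  let ?S = "space M1 \<times> space M2"
  let ?B = "{a \<times> b | a b. a \<in> sets M1 \<and> b \<in> sets M2}"
  have BP: "?B \<subseteq> Pow ?S" using rects_Pow[of "sets M1" M1 "sets M2" M2] by (simp add: rects_def)
  have RL: "R \<in> sets L" if "R \<in> sigma_sets ?S (rects G1 G2)" "G1 \<subseteq> sets M1" "G2 \<subseteq> sets M2" for R G1 G2
    using rects_sets[OF that(2,3)] that(1) sL by auto
  have "A \<in> sigma_sets ?S ?B" using A sL sets_pair_measure by metis
  then show ?thesis
  proof induct
    case (Basic a)
    then obtain x y where a: "a = x \<times> y" "x \<in> sets M1" "y \<in> sets M2" by auto
    show ?case unfolding goodset_def
    proof (intro allI impI exI conjI)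
      fix \<eta> :: real assume "\<eta> > 0"
      then show "measure L ((a - a) \<union> (a - a)) < \<eta>" by simp
      show "a \<in> sigma_sets ?S (rects {x} {y})" by (rule sigma_sets.Basic) (use a in \<open>auto simp: rects_def\<close>)
    qed (use a in auto)
  next
    case Empty
    show ?case unfolding goodset_def
    proof (intro allI impI exI conjI)
      fix \<eta> :: real assume "\<eta> > 0"
      then show "measure L (({} - {}) \<union> ({} - {})) < \<eta>" by simp
      show "{} \<in> sigma_sets ?S (rects {} {})" by (rule sigma_sets.Empty)
    qed auto
  next
    case (Compl a)
    have aS: "a \<subseteq> ?S" using sigma_sets_into_sp[OF BP Compl(1)] .
    show ?case unfolding goodset_def
    proof (intro allI impI)
      fix \<eta> :: real assume eta: "\<eta> > 0"
      obtain G1 G2 R where G: "finite G1" "G1 \<subseteq> sets M1" "finite G2" "G2 \<subseteq> sets M2"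
        and R: "R \<in> sigma_sets ?S (rects G1 G2)" and m: "measure L ((a - R) \<union> (R - a)) < \<eta>"
        using Compl(2)[unfolded goodset_def, rule_format, OF eta] by (elim exE conjE)
      have RS: "R \<subseteq> ?S" using sigma_sets_into_sp[OF rects_Pow[OF G(2,4)] R] .
      have eq: "((?S - a) - (?S - R)) \<union> ((?S - R) - (?S - a)) = (a - R) \<union> (R - a)"
        using aS RS by auto
      have Rc: "?S - R \<in> sigma_sets ?S (rects G1 G2)" using R by (rule sigma_sets.Compl)
      show "\<exists>G1 G2 R. finite G1 \<and> G1 \<subseteq> sets M1 \<and> finite G2 \<and> G2 \<subseteq> sets M2 \<and>
         R \<in> sigma_sets ?S (rects G1 G2) \<and> measure L ((?S - a - R) \<union> (R - (?S - a))) < \<eta>"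
        apply (rule exI[of _ G1], rule exI[of _ G2], rule exI[of _ "?S - R"])
        using G m eq Rc by simp
    qed
  next
    case (Union a)
    have aL: "a i \<in> sets L" for i using Union(1)[of i] sL sets_pair_measure by metis
    define U where "U = \<Union> (range a)"
    define B where "B n = (\<Union>i\<in>{..<n}. a i)" for n
    have BL: "B n \<in> sets L" for n unfolding B_def using aL by auto
    have UL: "U \<in> sets L" unfolding U_def using aL by auto
    have incB: "incseq B" by (rule incseq_SucI) (auto simp: B_def lessThan_Suc)
    have UB: "(\<Union>n. B n) = U" unfolding B_def U_def by auto
    show ?case unfolding goodset_def U_def[symmetric]
    proof (intro allI impI)
      fix \<eta> :: real assume eta: "\<eta> > 0"
      have "(\<lambda>n. measure L (B n)) \<longlonglongrightarrow> measure L U"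
        using L.finite_Lim_measure_incseq[of B] BL incB UB by auto
      then obtain N where N: "\<bar>measure L (B N) - measure L U\<bar> < \<eta> / 2"
        using eta unfolding lim_sequentially dist_real_def by (meson half_gt_zero order_refl)
      have BU: "B N \<subseteq> U" unfolding B_def U_def by auto
      have m1: "measure L (U - B N) < \<eta> / 2"
        using N L.finite_measure_Diff[OF UL BL BU] L.finite_measure_mono[OF BU UL] by simp
      define e where "e = \<eta> / (2 * (real N + 1))"
      have e: "e > 0" using eta by (simp add: e_def)
      have "\<forall>i. \<exists>G1 G2 R. finite G1 \<and> G1 \<subseteq> sets M1 \<and> finite G2 \<and> G2 \<subseteq> sets M2 \<and>
          R \<in> sigma_sets ?S (rects G1 G2) \<and> measure L ((a i - R) \<union> (R - a i)) < e"
        using Union(2) e unfolding goodset_def by blast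
      then obtain G1 G2 R where G: "\<And>i. finite (G1 i)" "\<And>i. G1 i \<subseteq> sets M1" "\<And>i. finite (G2 i)" "\<And>i. G2 i \<subseteq> sets M2"
        and R: "\<And>i. R i \<in> sigma_sets ?S (rects (G1 i) (G2 i))"
        and m: "\<And>i. measure L ((a i - R i) \<union> (R i - a i)) < e"
        by metis
      define H1 where "H1 = (\<Union>i<N. G1 i)"
      define H2 where "H2 = (\<Union>i<N. G2 i)"
      define R' where "R' = (\<Union>i\<in>{..<N}. R i)"
      have H: "finite H1" "H1 \<subseteq> sets M1" "finite H2" "H2 \<subseteq> sets M2"
        unfolding H1_def H2_def using G by (simp_all add: UN_subset_iff)
      interpret SS: sigma_algebra ?S "sigma_sets ?S (rects H1 H2)"
        by (rule sigma_algebra_sigma_sets[OF rects_Pow[OF H(2,4)]])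
      have Ri: "R i \<in> sigma_sets ?S (rects H1 H2)" if "i < N" for i
        using sigma_sets_mono'[OF rects_mono[of "G1 i" H1 "G2 i" H2]] R[of i] that
        unfolding H1_def H2_def by blast
      have R'S: "R' \<in> sigma_sets ?S (rects H1 H2)" unfolding R'_def
        by (rule SS.finite_UN) (auto intro: Ri)
      have RiL: "R i \<in> sets L" for i using RL[OF R G(2,4)] .
      define D where "D i = (a i - R i) \<union> (R i - a i)" for i
      have DL: "D i \<in> sets L" for i unfolding D_def using aL RiL by auto
      have sub: "(U - R') \<union> (R' - U) \<subseteq> (U - B N) \<union> (\<Union>i\<in>{..<N}. D i)"
        unfolding U_def R'_def B_def D_def by blast
      have "measure L ((U - R') \<union> (R' - U)) \<le> measure L ((U - B N) \<union> (\<Union>i\<in>{..<N}. D i))"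
        by (rule L.finite_measure_mono[OF sub]) (use UL BL DL in auto)
      also have "\<dots> \<le> measure L (U - B N) + measure L (\<Union>i\<in>{..<N}. D i)"
        by (rule measure_subadditive) (use UL BL DL in \<open>auto simp: L.emeasure_eq_measure\<close>)
      also have "measure L (\<Union>i\<in>{..<N}. D i) \<le> (\<Sum>i\<in>{..<N}. measure L (D i))"
        by (rule L.finite_measure_subadditive_finite) (use DL in auto)
      also have "\<dots> \<le> (\<Sum>i\<in>{..<N}. e)"
        by (rule sum_mono) (use m in \<open>auto simp: D_def less_imp_le\<close>)
      also have "\<dots> \<le> \<eta> / 2" using eta by (simp add: e_def field_simps)
      finally have "measure L ((U - R') \<union> (R' - U)) < \<eta>" using m1 by simp
      then show "\<exists>G1 G2 R. finite G1 \<and> G1 \<subseteq> sets M1 \<and> finite G2 \<and> G2 \<subseteq> sets M2 \<and>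
         R \<in> sigma_sets ?S (rects G1 G2) \<and> measure L ((U - R) \<union> (R - U)) < \<eta>"
        using H R'S by blast
    qed
  qed
qed


definition goodfun :: "'a measure \<Rightarrow> 'b measure \<Rightarrow> ('a \<times> 'b) measure \<Rightarrow> ('a \<times> 'b \<Rightarrow> real) \<Rightarrow> bool" where
  "goodfun M1 M2 L f \<longleftrightarrow> (\<forall>\<eta>>0. \<exists>G1 G2 g. finite G1 \<and> G1 \<subseteq> sets M1 \<and> finite G2 \<and> G2 \<subseteq> sets M2 \<and>
      g \<in> borel_measurable (sigma (space M1 \<times> space M2) (rects G1 G2)) \<and> integrable L g \<and>
      (\<integral>x. \<bar>f x - g x\<bar> \<partial>L) < \<eta>)"

lemma sigma_rects:
  assumes "G1 \<subseteq> sets M1" "G2 \<subseteq> sets M2"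
  shows "sets (sigma (space M1 \<times> space M2) (rects G1 G2)) = sigma_sets (space M1 \<times> space M2) (rects G1 G2)"
    "space (sigma (space M1 \<times> space M2) (rects G1 G2)) = space M1 \<times> space M2"
  using rects_Pow[OF assms] by auto

lemma meas_rects_mono:
  assumes "g \<in> borel_measurable (sigma (space M1 \<times> space M2) (rects G1 G2))"
    and "G1 \<subseteq> H1" "G2 \<subseteq> H2" "H1 \<subseteq> sets M1" "H2 \<subseteq> sets M2"
  shows "g \<in> borel_measurable (sigma (space M1 \<times> space M2) (rects H1 H2))"
proof (rule borel_measurable_subalgebra[OF _ _ assms(1)])
  have G: "G1 \<subseteq> sets M1" "G2 \<subseteq> sets M2" using assms by auto
  show "sets (sigma (space M1 \<times> space M2) (rects G1 G2)) \<subseteq> sets (sigma (space M1 \<times> space M2) (rects H1 H2))"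
    unfolding sigma_rects[OF G] sigma_rects[OF assms(4,5)]
    by (rule sigma_sets_mono'[OF rects_mono[OF assms(2,3)]])
  show "space (sigma (space M1 \<times> space M2) (rects G1 G2)) = space (sigma (space M1 \<times> space M2) (rects H1 H2))"
    unfolding sigma_rects[OF G] sigma_rects[OF assms(4,5)] ..
qed

lemma meas_rects_L:
  assumes "g \<in> borel_measurable (sigma (space M1 \<times> space M2) (rects G1 G2))"
    and "G1 \<subseteq> sets M1" "G2 \<subseteq> sets M2" and sL: "sets L = sets (M1 \<Otimes>\<^sub>M M2)"
  shows "g \<in> borel_measurable L"
proof (rule borel_measurable_subalgebra[OF _ _ assms(1)])
  show "sets (sigma (space M1 \<times> space M2) (rects G1 G2)) \<subseteq> sets L"
    unfolding sigma_rects[OF assms(2,3)] sL by (rule rects_sets[OF assms(2,3)])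
  show "space (sigma (space M1 \<times> space M2) (rects G1 G2)) = space L"
    unfolding sigma_rects[OF assms(2,3)] using sets_eq_imp_space_eq[OF sL] by (simp add: space_pair_measure)
qed

lemma approx_fun:
  fixes f :: "'a \<times> 'b \<Rightarrow> real"
  assumes fL: "finite_measure L" and sL: "sets L = sets (M1 \<Otimes>\<^sub>M M2)" and fi: "integrable L f"
  shows "goodfun M1 M2 L f"
  using fi
proof (induct rule: integrable_induct)
  case (base A c)
  interpret L: finite_measure L by fact
  show ?case unfolding goodfun_def
  proof (intro allI impI)
    fix \<eta> :: real assume eta: "\<eta> > 0"
    have eta': "\<eta> / (\<bar>c\<bar> + 1) > 0" using eta by simp
    obtain G1 G2 R where G: "finite G1" "G1 \<subseteq> sets M1" "finite G2" "G2 \<subseteq> sets M2"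
      and R: "R \<in> sigma_sets (space M1 \<times> space M2) (rects G1 G2)"
      and m: "measure L ((A - R) \<union> (R - A)) < \<eta> / (\<bar>c\<bar> + 1)"
      using approx_sets[OF fL sL base(1), unfolded goodset_def, rule_format, OF eta'] by (elim exE conjE)
    have RL: "R \<in> sets L" using rects_sets[OF G(2,4)] R sL by auto
    have Rm[measurable]: "R \<in> sets (sigma (space M1 \<times> space M2) (rects G1 G2))"
      using R sigma_rects[OF G(2,4)] by simp
    define g where "g x = c * indicator R x" for x
    have gm: "g \<in> borel_measurable (sigma (space M1 \<times> space M2) (rects G1 G2))"
      unfolding g_def by measurable
    have gi: "integrable L g"
      unfolding g_def using integrable_real_mult_indicator[OF RL L.integrable_const[of c]] by (simp add: mult.commute)
    define D where "D = (A - R) \<union> (R - A)"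
    have DL: "D \<in> sets L" unfolding D_def using RL base(1) by auto
    have "(\<integral>x. \<bar>indicator A x *\<^sub>R c - g x\<bar> \<partial>L) = (\<integral>x. \<bar>c\<bar> * indicator D x \<partial>L)"
      by (rule Bochner_Integration.integral_cong[OF refl]) (auto simp: g_def D_def indicator_def)
    also have "\<dots> = \<bar>c\<bar> * measure L D"
      using DL by (simp add: L.emeasure_eq_measure)
    also have "\<dots> \<le> \<bar>c\<bar> * (\<eta> / (\<bar>c\<bar> + 1))"
      using m by (intro mult_left_mono) (auto simp: D_def)
    also have "\<dots> < \<eta>" using eta by (simp add: field_simps)
    finally show "\<exists>G1 G2 g. finite G1 \<and> G1 \<subseteq> sets M1 \<and> finite G2 \<and> G2 \<subseteq> sets M2 \<and>
      g \<in> borel_measurable (sigma (space M1 \<times> space M2) (rects G1 G2)) \<and> integrable L g \<and>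
      (\<integral>x. \<bar>indicator A x *\<^sub>R c - g x\<bar> \<partial>L) < \<eta>"
      using G gm gi by blast
  qed
next
  case (add f1 f2)
  show ?case unfolding goodfun_def
  proof (intro allI impI)
    fix \<eta> :: real assume eta: "\<eta> > 0"
    then have eta2: "\<eta> / 2 > 0" by simp
    obtain G1 G2 g1 where G: "finite G1" "G1 \<subseteq> sets M1" "finite G2" "G2 \<subseteq> sets M2"
      and g1m: "g1 \<in> borel_measurable (sigma (space M1 \<times> space M2) (rects G1 G2))"
      and g1i: "integrable L g1" and m1: "(\<integral>x. \<bar>f1 x - g1 x\<bar> \<partial>L) < \<eta> / 2"
      using add(2)[unfolded goodfun_def, rule_format, OF eta2] by (elim exE conjE)
    obtain H1 H2 g2 where H: "finite H1" "H1 \<subseteq> sets M1" "finite H2" "H2 \<subseteq> sets M2"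
      and g2m: "g2 \<in> borel_measurable (sigma (space M1 \<times> space M2) (rects H1 H2))"
      and g2i: "integrable L g2" and m2: "(\<integral>x. \<bar>f2 x - g2 x\<bar> \<partial>L) < \<eta> / 2"
      using add(4)[unfolded goodfun_def, rule_format, OF eta2] by (elim exE conjE)
    have K: "finite (G1 \<union> H1)" "G1 \<union> H1 \<subseteq> sets M1" "finite (G2 \<union> H2)" "G2 \<union> H2 \<subseteq> sets M2"
      using G H by auto
    have gm: "(\<lambda>x. g1 x + g2 x) \<in> borel_measurable (sigma (space M1 \<times> space M2) (rects (G1 \<union> H1) (G2 \<union> H2)))"
      using meas_rects_mono[OF g1m _ _ K(2,4)] meas_rects_mono[OF g2m _ _ K(2,4)] by (intro borel_measurable_add) auto
    have "(\<integral>x. \<bar>(f1 x + f2 x) - (g1 x + g2 x)\<bar> \<partial>L) \<le> (\<integral>x. \<bar>f1 x - g1 x\<bar> + \<bar>f2 x - g2 x\<bar> \<partial>L)"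
      by (rule Bochner_Integration.integral_mono) (auto intro!: add(1,3) g1i g2i Bochner_Integration.integrable_add Bochner_Integration.integrable_diff integrable_abs)
    also have "\<dots> = (\<integral>x. \<bar>f1 x - g1 x\<bar> \<partial>L) + (\<integral>x. \<bar>f2 x - g2 x\<bar> \<partial>L)"
      by (rule Bochner_Integration.integral_add) (auto intro!: add(1,3) g1i g2i Bochner_Integration.integrable_add Bochner_Integration.integrable_diff integrable_abs)
    also have "\<dots> < \<eta>" using m1 m2 by simp
    finally show "\<exists>G1 G2 g. finite G1 \<and> G1 \<subseteq> sets M1 \<and> finite G2 \<and> G2 \<subseteq> sets M2 \<and>
      g \<in> borel_measurable (sigma (space M1 \<times> space M2) (rects G1 G2)) \<and> integrable L g \<and>
      (\<integral>x. \<bar>(f1 x + f2 x) - g x\<bar> \<partial>L) < \<eta>"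
      using K gm g1i g2i by blast
  qed
next
  case (lim f s)
  show ?case unfolding goodfun_def
  proof (intro allI impI)
    fix \<eta> :: real assume eta: "\<eta> > 0"
    then have eta2: "\<eta> / 2 > 0" by simp
    have sm: "s i \<in> borel_measurable L" for i using lim(1) by auto
    have fm: "f \<in> borel_measurable L" using lim(5) by auto
    have "(\<lambda>i. \<integral>x. \<bar>f x - s i x\<bar> \<partial>L) \<longlonglongrightarrow> (\<integral>x. 0 \<partial>L)"
    proof (rule integral_dominated_convergence[where w="\<lambda>x. 3 * \<bar>f x\<bar>"])
      show "AE x in L. (\<lambda>i. \<bar>f x - s i x\<bar>) \<longlonglongrightarrow> 0"
      proof (rule AE_I2)
        fix x assume x: "x \<in> space L"
        have "(\<lambda>i. f x - s i x) \<longlonglongrightarrow> f x - f x" by (intro tendsto_intros lim(3)[OF x])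
        then have "(\<lambda>i. \<bar>f x - s i x\<bar>) \<longlonglongrightarrow> \<bar>f x - f x\<bar>" by (rule tendsto_rabs)
        then show "(\<lambda>i. \<bar>f x - s i x\<bar>) \<longlonglongrightarrow> 0" by simp
      qed
      show "AE x in L. norm \<bar>f x - s i x\<bar> \<le> 3 * \<bar>f x\<bar>" for i
        using lim(4)[of _ i] by (intro AE_I2) fastforce
    qed (use sm fm in \<open>auto intro!: lim(5) borel_measurable_abs borel_measurable_diff\<close>)
    then have "(\<lambda>i. \<integral>x. \<bar>f x - s i x\<bar> \<partial>L) \<longlonglongrightarrow> 0" by simp
    then obtain i where i: "(\<integral>x. \<bar>f x - s i x\<bar> \<partial>L) < \<eta> / 2"
      using eta2 unfolding lim_sequentially dist_real_def by (metis abs_less_iff diff_zero order_refl)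
    obtain G1 G2 g where G: "finite G1" "G1 \<subseteq> sets M1" "finite G2" "G2 \<subseteq> sets M2"
      and gm: "g \<in> borel_measurable (sigma (space M1 \<times> space M2) (rects G1 G2))"
      and gi: "integrable L g" and m: "(\<integral>x. \<bar>s i x - g x\<bar> \<partial>L) < \<eta> / 2"
      using lim(2)[of i, unfolded goodfun_def, rule_format, OF eta2] by (elim exE conjE)
    have "(\<integral>x. \<bar>f x - g x\<bar> \<partial>L) \<le> (\<integral>x. \<bar>f x - s i x\<bar> + \<bar>s i x - g x\<bar> \<partial>L)"
      by (rule Bochner_Integration.integral_mono) (auto intro!: lim(1,5) gi Bochner_Integration.integrable_add Bochner_Integration.integrable_diff integrable_abs)
    also have "\<dots> = (\<integral>x. \<bar>f x - s i x\<bar> \<partial>L) + (\<integral>x. \<bar>s i x - g x\<bar> \<partial>L)"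
      by (rule Bochner_Integration.integral_add) (auto intro!: lim(1,5) gi Bochner_Integration.integrable_add Bochner_Integration.integrable_diff integrable_abs)
    also have "\<dots> < \<eta>" using i m by simp
    finally show "\<exists>G1 G2 g. finite G1 \<and> G1 \<subseteq> sets M1 \<and> finite G2 \<and> G2 \<subseteq> sets M2 \<and>
      g \<in> borel_measurable (sigma (space M1 \<times> space M2) (rects G1 G2)) \<and> integrable L g \<and>
      (\<integral>x. \<bar>f x - g x\<bar> \<partial>L) < \<eta>"
      using G gm gi by blast
  qed
qed




theorem theorem4:
  fixes M1 :: "'a measure" and M2 :: "'b measure"
    and \<mu> \<nu> \<xi> :: "('a \<times> 'b) measure"
  assumes "sets \<mu> = sets (M1 \<Otimes>\<^sub>M M2)" and "sets \<nu> = sets (M1 \<Otimes>\<^sub>M M2)"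
    and "sets \<xi> = sets (M1 \<Otimes>\<^sub>M M2)"
    and "finite_measure \<mu>" and "finite_measure \<nu>" and "finite_measure \<xi>"
    and "absolutely_continuous (add_measure \<mu> \<nu>) \<xi>"
    and "\<epsilon> > 0"
  shows "\<exists>C D. sigma_algebra (space M1) C \<and> finite C \<and> C \<subseteq> sets M1 \<and>
           sigma_algebra (space M2) D \<and> finite D \<and> D \<subseteq> sets M2 \<and>
           (\<forall>F. sigma_algebra (space M1 \<times> space M2) F \<and>
                prod_sigma (space M1) C (space M2) D \<subseteq> F \<and> F \<subseteq> sets (M1 \<Otimes>\<^sub>M M2) \<longrightarrow>
              measure \<xi> {z \<in> space (M1 \<Otimes>\<^sub>M M2).
                 dH (likelihood_ratio (restr_measure \<mu> F) (restr_measure \<nu> F) z)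
                    (likelihood_ratio \<mu> \<nu> z) \<ge> \<epsilon>} < \<epsilon>)"
proof -
  note sm = assms(1) and sn = assms(2) and sx = assms(3) and fm = assms(4) and fn = assms(5)
    and fx = assms(6) and ac = assms(7) and e = assms(8)
  define lam where "lam = add_measure \<mu> \<nu>"
  have smn: "sets \<mu> = sets \<nu>" using sm sn by simp
  note P = add_measure_props[OF smn, folded lam_def]
  have slam: "sets lam = sets (M1 \<Otimes>\<^sub>M M2)" using P sm by simp
  have spm: "space \<mu> = space M1 \<times> space M2" using sets_eq_imp_space_eq[OF sm] by (simp add: space_pair_measure)
  have splam: "space lam = space M1 \<times> space M2" using P spm by simp
  have spx: "space \<xi> = space M1 \<times> space M2" using sets_eq_imp_space_eq[OF sx] by (simp add: space_pair_measure)
  have flam: "finite_measure lam" unfolding lam_def by (rule add_measure_fin[OF smn fm fn])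
  interpret lam: finite_measure lam by (rule flam)
  interpret mu: finite_measure \<mu> by (rule fm)
  have sfmu: "sigma_finite_measure \<mu>" by unfold_locales
  have acmu: "absolutely_continuous lam \<mu>" unfolding lam_def by (rule add_measure_ac(1)[OF smn])
  have smlam: "sets \<mu> = sets lam" using P by simp
  obtain \<delta> where d: "\<delta> > 0" and dprop: "\<And>A. A \<in> sets lam \<Longrightarrow> measure lam A < \<delta> \<Longrightarrow> measure \<xi> A < \<epsilon>"
    using abs_cont_eps_delta[OF flam fx _ ac[folded lam_def] e] sx slam by auto
  define f where "f z = enn2real (RN_deriv lam \<mu> z)" for z
  have fmeas[measurable]: "f \<in> borel_measurable lam" unfolding f_def by measurable
  have "integrable lam (\<lambda>x. enn2real (RN_deriv lam \<mu> x) * 1)"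
    by (rule lam.RN_deriv_integrable[OF sfmu acmu smlam, THEN iffD1]) (auto intro: mu.integrable_const)
  then have fi: "integrable lam f" unfolding f_def[abs_def] by simp
  have fint: "(\<integral>x. f x * indicator A x \<partial>lam) = measure \<mu> A" if A: "A \<in> sets lam" for A
  proof -
    have "measure \<mu> A = (\<integral>x. indicator A x \<partial>\<mu>)" using A smlam by simp
    also have "\<dots> = (\<integral>x. f x * indicator A x \<partial>lam)"
      using lam.RN_deriv_integral[OF sfmu acmu smlam, of "indicator A"] A by (simp add: f_def)
    finally show ?thesis by (rule sym)
  qed
  define \<eta> where "\<eta> = \<delta> * \<epsilon> / 4"
  have eta: "\<eta> > 0" using d e by (simp add: \<eta>_def)
  obtain G1 G2 g where G: "finite G1" "G1 \<subseteq> sets M1" "finite G2" "G2 \<subseteq> sets M2"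
    and gm: "g \<in> borel_measurable (sigma (space M1 \<times> space M2) (rects G1 G2))"
    and gi: "integrable lam g" and gapprox: "(\<integral>x. \<bar>f x - g x\<bar> \<partial>lam) < \<eta>"
    using approx_fun[OF flam slam fi, unfolded goodfun_def, rule_format, OF eta] by (elim exE conjE)
  define C where "C = sigma_sets (space M1) G1"
  define D where "D = sigma_sets (space M2) G2"
  have G1P: "G1 \<subseteq> Pow (space M1)" using G(2) sets.space_closed[of M1] by auto
  have G2P: "G2 \<subseteq> Pow (space M2)" using G(4) sets.space_closed[of M2] by auto
  show ?thesis
  proof (intro exI[of _ C] exI[of _ D] conjI allI impI)
    show "sigma_algebra (space M1) C" unfolding C_def by (rule sigma_algebra_sigma_sets[OF G1P])
    show "sigma_algebra (space M2) D" unfolding D_def by (rule sigma_algebra_sigma_sets[OF G2P])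
    show "finite C" unfolding C_def by (rule finite_sigma_sets[OF G(1) G1P])
    show "finite D" unfolding D_def by (rule finite_sigma_sets[OF G(3) G2P])
    show "C \<subseteq> sets M1" unfolding C_def by (rule sets.sigma_sets_subset[OF G(2)])
    show "D \<subseteq> sets M2" unfolding D_def by (rule sets.sigma_sets_subset[OF G(4)])
    fix F assume FF: "sigma_algebra (space M1 \<times> space M2) F \<and>
        prod_sigma (space M1) C (space M2) D \<subseteq> F \<and> F \<subseteq> sets (M1 \<Otimes>\<^sub>M M2)"
    then have saF: "sigma_algebra (space \<mu>) F" and CDF: "prod_sigma (space M1) C (space M2) D \<subseteq> F"
      and Fsub: "F \<subseteq> sets \<mu>" using spm sm by auto
    define Fm where "Fm = sigma (space \<mu>) F"
    note RF = restr_facts[OF saF Fsub, folded Fm_def]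
    have spn: "space \<nu> = space \<mu>" using sets_eq_imp_space_eq[OF smn] by simp
    note RFn = restr_facts[of \<nu> F, unfolded spn, OF saF Fsub[unfolded smn], folded Fm_def]
    have LF: "add_measure (restr_measure \<mu> F) (restr_measure \<nu> F) = restr_to_subalg lam Fm"
      unfolding lam_def Fm_def by (rule add_restr[OF smn saF Fsub])
    have sublam: "subalgebra lam Fm" using RF P by (simp add: subalgebra_def)
    define muF where "muF = restr_measure \<mu> F"
    define nuF where "nuF = restr_measure \<nu> F"
    define LFm where "LFm = restr_to_subalg lam Fm"
    have smuF: "sets muF = F" unfolding muF_def using RF by (simp add: sets_restr_to_subalg)
    have snuF: "sets nuF = F" unfolding nuF_def using RFn by (simp add: sets_restr_to_subalg)
    have sLF: "sets LFm = F" unfolding LFm_def using RF sublam by (simp add: sets_restr_to_subalg)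
    have spLF: "space LFm = space lam" unfolding LFm_def by (simp add: space_restr_to_subalg)
    have eLF: "emeasure LFm A = emeasure lam A" if "A \<in> sets LFm" for A
      unfolding LFm_def using that sublam sLF RF by (subst emeasure_restr_to_subalg) auto
    have fmuF: "finite_measure muF" unfolding muF_def using RF finite_measure_restr_to_subalg[OF _ fm] by simp
    have fnuF: "finite_measure nuF" unfolding nuF_def using RFn finite_measure_restr_to_subalg[OF _ fn] by simp
    have smnF: "sets muF = sets nuF" using smuF snuF by simp
    have LF': "add_measure muF nuF = LFm" using LF by (simp add: muF_def nuF_def LFm_def)
    have fLF: "finite_measure LFm" using add_measure_fin[OF smnF fmuF fnuF] LF' by simp
    interpret LFm: finite_measure LFm by (rule fLF)
    interpret muF: finite_measure muF by (rule fmuF)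
    have sfmuF: "sigma_finite_measure muF" by unfold_locales
    have acmuF: "absolutely_continuous LFm muF" using add_measure_ac(1)[OF smnF] LF' by simp
    have smuLF: "sets muF = sets LFm" using smuF sLF by simp
    define h where "h z = enn2real (RN_deriv LFm muF z)" for z
    have hLF: "h \<in> borel_measurable LFm" unfolding h_def by measurable
    have hFm: "h \<in> borel_measurable Fm" using hLF sLF RF P(2) by (simp add: measurable_def space_restr_to_subalg LFm_def)
    have hlam: "h \<in> borel_measurable lam"
      by (rule borel_measurable_subalgebra[OF _ _ hLF]) (use sLF RF P spLF Fsub in auto)
    have "integrable LFm (\<lambda>x. enn2real (RN_deriv LFm muF x) * 1)"
      by (rule LFm.RN_deriv_integrable[OF sfmuF acmuF smuLF, THEN iffD1]) (auto intro: muF.integrable_const)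
    then have hiLF: "integrable LFm h" unfolding h_def[abs_def] by simp
    have hi: "integrable lam h"
      using integrable_subalgebra[OF hLF _ spLF eLF] hiLF sLF Fsub smlam by auto
    have hint: "(\<integral>x. h x * indicator A x \<partial>lam) = (\<integral>x. f x * indicator A x \<partial>lam)" if A: "A \<in> sets Fm" for A
    proof -
      have AF: "A \<in> F" using A RF by simp
      have Alam: "A \<in> sets lam" using AF Fsub smlam by auto
      have ALF: "A \<in> sets LFm" using AF sLF by simp
      have im: "(\<lambda>x. h x * indicator A x) \<in> borel_measurable LFm" using hLF ALF by measurable
      have "(\<integral>x. h x * indicator A x \<partial>lam) = (\<integral>x. h x * indicator A x \<partial>LFm)"
        by (rule integral_subalgebra[OF im _ spLF eLF, symmetric]) (use sLF Fsub smlam in auto)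
      also have "\<dots> = (\<integral>x. indicator A x \<partial>muF)"
        using LFm.RN_deriv_integral[OF sfmuF acmuF smuLF, of "indicator A"] ALF by (simp add: h_def)
      also have "\<dots> = measure muF A" using ALF smuLF by simp
      also have "\<dots> = measure \<mu> A"
        unfolding muF_def RF(4) measure_def using RF AF by (subst emeasure_restr_to_subalg) auto
      also have "\<dots> = (\<integral>x. f x * indicator A x \<partial>lam)" using fint[OF Alam] by simp
      finally show ?thesis .
    qed
    have gFm: "g \<in> borel_measurable Fm"
    proof (rule borel_measurable_subalgebra[OF _ _ gm])
      have "sets (sigma (space M1 \<times> space M2) (rects G1 G2)) = sigma_sets (space M1 \<times> space M2) (rects G1 G2)"
        by (rule sigma_rects(1)[OF G(2,4)])
      also have "\<dots> \<subseteq> prod_sigma (space M1) C (space M2) D"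
        unfolding prod_sigma_def C_def D_def
        by (rule sigma_sets_mono') (auto simp: rects_def)
      finally show "sets (sigma (space M1 \<times> space M2) (rects G1 G2)) \<subseteq> sets Fm" using CDF RF by auto
      show "space (sigma (space M1 \<times> space M2) (rects G1 G2)) = space Fm"
        using sigma_rects(2)[OF G(2,4)] RF spm by simp
    qed
    have contr: "(\<integral>x. \<bar>h x - f x\<bar> \<partial>lam) \<le> 2 * (\<integral>x. \<bar>f x - g x\<bar> \<partial>lam)"
      by (rule contraction[OF _ _ hFm gFm hi fi gi hint]) (use RF P Fsub in auto)
    define E' where "E' = {x \<in> space lam. \<epsilon> \<le> \<bar>h x - f x\<bar>}"
    have E'L: "E' \<in> sets lam" unfolding E'_def using hlam by measurable
    have "measure lam E' \<le> (\<integral>x. \<bar>h x - f x\<bar> \<partial>lam) / \<epsilon>"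
      unfolding E'_def
      by (rule integral_Markov_inequality_measure[OF _ sets.top]) (use hi fi e in auto)
    also have "\<dots> \<le> 2 * \<eta> / \<epsilon>" using contr gapprox e by (simp add: divide_right_mono)
    also have "\<dots> < \<delta>" using d e by (simp add: \<eta>_def field_simps)
    finally have mE': "measure \<xi> E' < \<epsilon>" using dprop[OF E'L] by simp
    define hn where "hn z = enn2real (RN_deriv LFm nuF z)" for z
    define fnu where "fnu z = enn2real (RN_deriv lam \<nu> z)" for z
    have ae1: "AE x in lam. h x + hn x = 1"
    proof (rule AE_restr_to_subalg[OF sublam])
      have "AE x in LFm. h x + hn x = 1"
        using RN_sum_one[OF smnF fmuF fnuF] unfolding LF' h_def hn_def .
      then show "AE x in restr_to_subalg lam Fm. h x + hn x = 1" unfolding LFm_def .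
    qed
    have ae2: "AE x in lam. f x + fnu x = 1"
      using RN_sum_one[OF smn fm fn] unfolding f_def fnu_def lam_def .
    have aeq: "AE x in lam. dH (likelihood_ratio (restr_measure \<mu> F) (restr_measure \<nu> F) x)
                    (likelihood_ratio \<mu> \<nu> x) = \<bar>h x - f x\<bar>"
      using ae1 ae2
    proof eventually_elim
      case (elim x)
      have "likelihood_ratio (restr_measure \<mu> F) (restr_measure \<nu> F) x = (h x, hn x)"
        unfolding likelihood_ratio_def h_def hn_def LF'[symmetric] muF_def nuF_def by simp
      moreover have "likelihood_ratio \<mu> \<nu> x = (f x, fnu x)"
        unfolding likelihood_ratio_def f_def fnu_def lam_def by simp
      ultimately show ?case using elim by (simp add: dH_def)
    qed
    have aex: "AE x in \<xi>. dH (likelihood_ratio (restr_measure \<mu> F) (restr_measure \<nu> F) x)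
                    (likelihood_ratio \<mu> \<nu> x) = \<bar>h x - f x\<bar>"
      by (rule absolutely_continuous_AE[OF _ ac[folded lam_def] aeq]) (use sx slam in simp)
    define E where "E = {z \<in> space (M1 \<Otimes>\<^sub>M M2).
                 dH (likelihood_ratio (restr_measure \<mu> F) (restr_measure \<nu> F) z)
                    (likelihood_ratio \<mu> \<nu> z) \<ge> \<epsilon>}"
    have hnLF: "hn \<in> borel_measurable LFm" unfolding hn_def by measurable
    have hnlam: "hn \<in> borel_measurable lam"
      by (rule borel_measurable_subalgebra[OF _ _ hnLF]) (use sLF RF P spLF Fsub in auto)
    have fnulam: "fnu \<in> borel_measurable lam" unfolding fnu_def by measurable
    have EL: "E \<in> sets lam"
    proof -
      have "E = {z \<in> space lam. \<epsilon> \<le> \<bar>h z / (h z + hn z) - f z / (f z + fnu z)\<bar>}"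
      proof -
        have "likelihood_ratio (restr_measure \<mu> F) (restr_measure \<nu> F) z = (h z, hn z)" for z
          unfolding likelihood_ratio_def h_def hn_def LF'[symmetric] muF_def nuF_def by simp
        moreover have "likelihood_ratio \<mu> \<nu> z = (f z, fnu z)" for z
          unfolding likelihood_ratio_def f_def fnu_def lam_def by simp
        ultimately show ?thesis unfolding E_def using splam by (simp add: dH_def space_pair_measure)
      qed
      also have "\<dots> \<in> sets lam" using hlam hnlam fmeas fnulam by measurable
      finally show ?thesis .
    qed
    have "measure \<xi> E = measure \<xi> E'"
    proof (rule measure_eq_AE)
      show "AE x in \<xi>. (x \<in> E) = (x \<in> E')"
        using aex by eventually_elim (simp add: E_def E'_def splam spx space_pair_measure)
      show "E \<in> sets \<xi>" using EL sx slam by simp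
      show "E' \<in> sets \<xi>" using E'L sx slam by simp
    qed
    then have "measure \<xi> E < \<epsilon>" using mE' by simp
    then show "measure \<xi> {z \<in> space (M1 \<Otimes>\<^sub>M M2).
                 dH (likelihood_ratio (restr_measure \<mu> F) (restr_measure \<nu> F) z)
                    (likelihood_ratio \<mu> \<nu> z) \<ge> \<epsilon>} < \<epsilon>" by (simp add: E_def)
  qed
qed


end
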